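(* Let $(L,\sqsubseteq)$ be a countably complete lattice, $F:L\to L$ monotone and $\omega$-continuous, $k\in\omega$, and $b\in L^\omega$ with $b_{n+1}\sqsubseteq b_n$ for all $n$. Define sequences $G^j b$ by $(G^0b)_n=b_n$ and $(G^{j}b)_n=F\big((G^{j-1}b)_n\big)\sqcap b_n$ for $j\ge1$. If $F\big((G^kb)_n\big)\sqsubseteq b_n$ for all $n$, then $\sup_{i\ge n}F^i(\bot)\sqsubseteq b_n$ for all $n$. In particular, for $\ell\in L$ and $G_\ell(m)=F(m)\sqcap\ell$: if $F(G_\ell^k(\ell))\sqsubseteq\ell$ then $\sup_i F^i(\bot)=\mathrm{lfp}\,F\sqsubseteq\ell$.
   Context: A countably complete lattice is a lattice in which every countable subset (including $\emptyset$) has a supremum and an infimum, with least element $\bot$ and meet $\sqcap$. $F$ is $\omega$-continuous if $F(\sup_n c_n)=\sup_n F(c_n)$ for every ascending chain $(c_n)$. $F^i$ is the $i$-fold iterate. *)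

theory Defs
  imports "HOL-Library.Order_Continuity"
begin

fun Gseq :: "('a::countable_complete_lattice \<Rightarrow> 'a) \<Rightarrow> (nat \<Rightarrow> 'a) \<Rightarrow> nat \<Rightarrow> nat \<Rightarrow> 'a" where
  "Gseq F b 0 n = b n"
| "Gseq F b (Suc j) n = inf (F (Gseq F b j n)) (b n)"

end

theory Submission
  imports Defs
begin

lemma Gseq_le_b: "Gseq F b j n \<le> b n"
  by (cases j) auto

lemma Gseq_anti:
  assumes "mono F" shows "Gseq F b (Suc j) n \<le> Gseq F b j n"
proof (induction j)
  case 0 then show ?case by simp
next
  case (Suc j)
  have "F (Gseq F b (Suc j) n) \<le> F (Gseq F b j n)" using Suc assms by (simp add: monoD)
  then show ?case by (auto intro: le_infI1)
qed

lemma Gseq_anti2: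
  assumes "mono F" "j \<le> k" shows "Gseq F b k n \<le> Gseq F b j n"
  using assms(2)
proof (induction k)
  case 0 then show ?case by simp
next
  case (Suc k)
  then show ?case
    by (metis Gseq_anti assms(1) le_Suc_eq order_trans order_refl)
qed

lemma iter_le:
  fixes F :: "'a::countable_complete_lattice \<Rightarrow> 'a"
  assumes mono: "mono F" and h: "\<forall>n. F (Gseq F b k n) \<le> b n"
  shows "(F ^^ i) bot \<le> Gseq F b k n"
proof (induction i arbitrary: n)
  case 0 then show ?case by simp
next
  case (Suc i)
  have "\<forall>j\<le>k. (F ^^ Suc i) bot \<le> Gseq F b j n"
  proof (intro allI impI)
    fix j assume "j \<le> k"
    then show "(F ^^ Suc i) bot \<le> Gseq F b j n"
    proof (induction j)
      case 0
      have "F ((F ^^ i) bot) \<le> F (Gseq F b k n)" using Suc.IH mono by (simp add: monoD)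
      then show ?case using h by (auto intro: order_trans)
    next
      case (Suc j)
      have "(F ^^ i) bot \<le> Gseq F b j n"
        using Suc.prems Gseq_anti2[OF mono, of j k b n] Suc.IH order_trans
        by (metis \<open>\<And>n. (F ^^ i) bot \<le> Gseq F b k n\<close> Suc_leD)
      then have "F ((F ^^ i) bot) \<le> F (Gseq F b j n)" using mono by (simp add: monoD)
      moreover have "F ((F ^^ i) bot) \<le> b n"
        using Suc.IH[OF Suc_leD[OF Suc.prems]] Gseq_le_b by (metis funpow.simps(2) o_apply order_trans)
      ultimately show ?case by simp
    qed
  qed
  then show ?case by simp
qed

lemma Gseq_const: "Gseq F (\<lambda>_. l) k n = ((\<lambda>m. inf (F m) l) ^^ k) l"
  by (induction k) auto

lemma iter_mono:
  fixes F :: "'a::countable_complete_lattice \<Rightarrow> 'a"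
  assumes "mono F" shows "mono (\<lambda>i. (F ^^ i) bot)"
proof -
  have "(F ^^ i) bot \<le> (F ^^ Suc i) bot" for i
  proof (induction i)
    case 0 then show ?case by simp
  next
    case (Suc i) then show ?case using assms by (simp add: monoD)
  qed
  then show ?thesis by (simp add: mono_iff_le_Suc)
qed

theorem mainTheorem10:
  fixes F :: "'a::countable_complete_lattice \<Rightarrow> 'a" and k :: nat
  assumes mono: "mono F" and cont: "sup_continuous F"
  shows "(\<forall>b :: nat \<Rightarrow> 'a. (\<forall>n. b (Suc n) \<le> b n) \<longrightarrow>
            (\<forall>n. F (Gseq F b k n) \<le> b n) \<longrightarrow>
            (\<forall>n. (SUP i\<in>{n..}. (F ^^ i) bot) \<le> b n))
       \<and> (\<forall>l :: 'a. F (((\<lambda>m. inf (F m) l) ^^ k) l) \<le> l \<longrightarrow>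
            (F (SUP i. (F ^^ i) bot) = (SUP i. (F ^^ i) bot)
             \<and> (\<forall>x. F x = x \<longrightarrow> (SUP i. (F ^^ i) bot) \<le> x)
             \<and> (SUP i. (F ^^ i) bot) \<le> l))"
proof -
  have P1: "(SUP i\<in>A. (F ^^ i) bot) \<le> b n" if h: "\<forall>n. F (Gseq F b k n) \<le> b n" for b n and A :: "nat set"
  proof (rule ccSUP_least)
    show "countable A" by simp
    fix i show "(F ^^ i) bot \<le> b n"
      using iter_le[OF mono h, of i n] Gseq_le_b order_trans by metis
  qed
  have fix1: "F (SUP i. (F ^^ i) bot) = (SUP i. (F ^^ i) bot)"
  proof -
    have "F (SUP i. (F ^^ i) bot) = (SUP i. F ((F ^^ i) bot))"
      using sup_continuousD[OF cont iter_mono[OF mono]] .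
    also have "\<dots> = (SUP i. (F ^^ Suc i) bot)" by simp
    also have "\<dots> = (SUP i. (F ^^ i) bot)"
    proof (rule antisym)
      show "(SUP i. (F ^^ Suc i) bot) \<le> (SUP i. (F ^^ i) bot)"
      proof (rule ccSUP_least)
        fix i show "(F ^^ Suc i) bot \<le> (SUP i. (F ^^ i) bot)"
          by (rule ccSUP_upper) simp_all
      qed simp
      show "(SUP i. (F ^^ i) bot) \<le> (SUP i. (F ^^ Suc i) bot)"
      proof (rule ccSUP_least)
        fix i
        have cU: "countable (UNIV :: nat set)" by simp
        have "(F ^^ i) bot \<le> (F ^^ Suc i) bot"
          using iter_mono[OF mono] by (simp add: mono_iff_le_Suc)
        then show "(F ^^ i) bot \<le> (SUP i. (F ^^ Suc i) bot)"
          by (rule ccSUP_upper2[of UNIV i "(F ^^ i) bot" "\<lambda>i. (F ^^ Suc i) bot", OF cU UNIV_I])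
      qed simp
    qed
    finally show ?thesis .
  qed
  have least: "(SUP i. (F ^^ i) bot) \<le> x" if "F x = x" for x
  proof (rule ccSUP_least)
    show "countable (UNIV :: nat set)" by simp
    fix i show "(F ^^ i) bot \<le> x"
    proof (induction i)
      case 0 then show ?case by simp
    next
      case (Suc i)
      have "F ((F ^^ i) bot) \<le> F x" using Suc mono by (rule_tac monoD)
      then show ?case using that by simp
    qed
  qed
  have A: "\<forall>b :: nat \<Rightarrow> 'a. (\<forall>n. b (Suc n) \<le> b n) \<longrightarrow>
            (\<forall>n. F (Gseq F b k n) \<le> b n) \<longrightarrow>
            (\<forall>n. (SUP i\<in>{n..}. (F ^^ i) bot) \<le> b n)"
    using P1 by blast
  have B: "(SUP i. (F ^^ i) bot) \<le> l" if "F (((\<lambda>m. inf (F m) l) ^^ k) l) \<le> l" for l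
  proof -
    from that have "\<forall>n. F (Gseq F (\<lambda>_. l) k n) \<le> l" by (simp only: Gseq_const) blast
    from P1[OF this] show "(SUP i. (F ^^ i) bot) \<le> l" .
  qed
  show ?thesis using A B fix1 least by blast
qed

end
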